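(* Let $k\ge 1$ and $n\ge 3$ be integers, let $0<\alpha<1$ be a real number, and let $G\in T_k(n)$. Then \[{}^0R_{\alpha}(G)\le k(n-1)^{\alpha}+2(k+1)^{\alpha}+(n-k-2)(k+2)^{\alpha},\] and equality holds if and only if $G=K_k+P_{n-k}$.
   Context: All graphs are finite, simple, undirected and connected. For a graph $G$ and real $\alpha\neq 0$, the zeroth-order general Randić index is ${}^0R_{\alpha}(G)=\sum_{v\in V(G)}d(v)^{\alpha}$, where $d(v)$ is the degree of $v$. A connected graph $G$ is a $k$-generalized quasi tree if there is a subset $V_k\subset V(G)$ with $|V_k|=k$ such that $G-V_k$ is a tree, but for every subset $V_{k-1}\subset V(G)$ with $|V_{k-1}|=k-1$, $G-V_{k-1}$ is not a tree. $T_k(n)$ denotes the class of $k$-generalized quasi trees of order $n$. For vertex-disjoint graphs $G,H$, the join $G+H$ has vertex set $V(G)\cup V(H)$ and edge set $E(G)\cup E(H)\cup\{uv: u\in V(G), v\in V(H)\}$. $K_k$ is the complete graph on $k$ vertices and $P_m$ is the path on $m$ vertices. *)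

theory Defs
  imports Main Complex_Main
begin

definition simple_graph :: "'a set \<Rightarrow> 'a set set \<Rightarrow> bool" where
  "simple_graph V E \<longleftrightarrow> finite V \<and> (\<forall>e\<in>E. \<exists>u v. u \<in> V \<and> v \<in> V \<and> u \<noteq> v \<and> e = {u, v})"

definition degree :: "'a set \<Rightarrow> 'a set set \<Rightarrow> 'a \<Rightarrow> nat" where
  "degree V E v = card {u \<in> V. {u, v} \<in> E}"

definition del_verts :: "'a set \<Rightarrow> 'a set set \<Rightarrow> 'a set \<Rightarrow> 'a set set" where
  "del_verts V E S = {e \<in> E. e \<inter> S = {}}"

definition connected_graph :: "'a set \<Rightarrow> 'a set set \<Rightarrow> bool" where
  "connected_graph V E \<longleftrightarrow> V \<noteq> {} \<and>
     (\<forall>u\<in>V. \<forall>v\<in>V. (\<lambda>x y. {x, y} \<in> E)\<^sup>*\<^sup>* u v)"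

definition has_cycle :: "'a set \<Rightarrow> 'a set set \<Rightarrow> bool" where
  "has_cycle V E \<longleftrightarrow> (\<exists>xs. length xs \<ge> 3 \<and> distinct xs \<and> set xs \<subseteq> V \<and>
     (\<forall>i < length xs. {xs ! i, xs ! ((i + 1) mod length xs)} \<in> E))"

definition is_tree :: "'a set \<Rightarrow> 'a set set \<Rightarrow> bool" where
  "is_tree V E \<longleftrightarrow> connected_graph V E \<and> \<not> has_cycle V E"

definition gen_quasi_tree :: "nat \<Rightarrow> 'a set \<Rightarrow> 'a set set \<Rightarrow> bool" where
  "gen_quasi_tree k V E \<longleftrightarrow> simple_graph V E \<and> connected_graph V E \<and>
     (\<exists>S. S \<subset> V \<and> card S = k \<and> is_tree (V - S) (del_verts V E S)) \<and>
     (\<forall>S. S \<subset> V \<and> card S = k - 1 \<longrightarrow> \<not> is_tree (V - S) (del_verts V E S))"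

definition randic0 :: "real \<Rightarrow> 'a set \<Rightarrow> 'a set set \<Rightarrow> real" where
  "randic0 \<alpha> V E = (\<Sum>v\<in>V. real (degree V E v) powr \<alpha>)"

definition complete_graph :: "nat \<Rightarrow> nat set \<times> nat set set" where
  "complete_graph k = ({0..<k}, {{i, j} | i j. i < k \<and> j < k \<and> i \<noteq> j})"

definition path_graph :: "nat \<Rightarrow> nat set \<times> nat set set" where
  "path_graph m = ({0..<m}, {{i, i + 1} | i. i + 1 < m})"

definition graph_join :: "'a set \<times> 'a set set \<Rightarrow> 'b set \<times> 'b set set \<Rightarrow> ('a + 'b) set \<times> ('a + 'b) set set" where
  "graph_join G H = (Inl ` fst G \<union> Inr ` fst H,
     ((`) Inl) ` snd G \<union> ((`) Inr) ` snd H \<union> {{Inl u, Inr v} | u v. u \<in> fst G \<and> v \<in> fst H})"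

definition graph_iso :: "'a set \<Rightarrow> 'a set set \<Rightarrow> 'b set \<times> 'b set set \<Rightarrow> bool" where
  "graph_iso V E H \<longleftrightarrow> (\<exists>f. bij_betw f V (fst H) \<and>
     (\<forall>u\<in>V. \<forall>v\<in>V. {u, v} \<in> E \<longleftrightarrow> {f u, f v} \<in> snd H))"

end

theory Submission
  imports Defs
begin


lemma concave_step:
  fixes x a :: real
  assumes "x > 1" "0 < a" "a < 1"
  shows "(x+1) powr a - x powr a < x powr a - (x-1) powr a"
proof -
  have d: "\<And>t. t > 0 \<Longrightarrow> ((\<lambda>z. z powr a) has_real_derivative a * t powr (a - 1)) (at t)"
    by (rule has_real_derivative_powr)
  obtain z1 where z1: "x < z1" "z1 < x+1" "(x+1) powr a - x powr a = (x+1-x) * (a * z1 powr (a-1))"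
    using MVT2[of x "x+1" "\<lambda>z. z powr a" "\<lambda>t. a * t powr (a - 1)"] d assms by force
  obtain z2 where z2: "x-1 < z2" "z2 < x" "x powr a - (x-1) powr a = (x-(x-1)) * (a * z2 powr (a-1))"
    using MVT2[of "x-1" x "\<lambda>z. z powr a" "\<lambda>t. a * t powr (a - 1)"] d assms by force
  have "z1 powr (a-1) < z2 powr (a-1)"
    using powr_less_mono2_neg[of "a-1" z2 z1] z1 z2 assms by linarith
  then have "a * z1 powr (a-1) < a * z2 powr (a-1)" using assms by simp
  then show ?thesis using z1 z2 by simp
qed

definition gg :: "nat \<Rightarrow> real \<Rightarrow> nat \<Rightarrow> real" where
  "gg k a d = real (d + k) powr a"

lemma incr_bound:
  assumes "k \<ge> 1" "0 < a" "a < 1" "d \<ge> 1"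
  shows "gg k a (d+1) - gg k a d \<le> gg k a 2 - gg k a 1 \<and>
         (d \<ge> 2 \<longrightarrow> gg k a (d+1) - gg k a d < gg k a 2 - gg k a 1)"
  using assms(4)
proof (induction d rule: dec_induct)
  case base then show ?case by (simp add: numeral_2_eq_2)
next
  case (step d)
  have "real (d+1+k) > 1" using step assms by simp
  from concave_step[OF this assms(2,3)]
  have "gg k a (d+2) - gg k a (d+1) < gg k a (d+1) - gg k a d"
    unfolding gg_def by (simp add: add_ac)
  then show ?case using step by auto
qed

lemma tangent_bound:
  assumes "k \<ge> 1" "0 < a" "a < 1" "d \<ge> 1"
  shows "gg k a d \<le> gg k a 2 + (real d - 2) * (gg k a 2 - gg k a 1) \<and>
         (d \<ge> 3 \<longrightarrow> gg k a d < gg k a 2 + (real d - 2) * (gg k a 2 - gg k a 1))"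
proof (cases "d = 1")
  case True then show ?thesis by simp
next
  case False
  then have "d \<ge> 2" using assms by simp
  then show ?thesis
  proof (induction d rule: dec_induct)
    case base then show ?case by simp
  next
    case (step d)
    from incr_bound[OF assms(1,2,3), of d] step
    have "gg k a (d+1) - gg k a d \<le> gg k a 2 - gg k a 1"
         "gg k a (d+1) - gg k a d < gg k a 2 - gg k a 1" by auto
    then show ?case using step by (auto simp: algebra_simps)
  qed
qed

lemma g_mono: "0 < a \<Longrightarrow> gg k a 1 < gg k a 2"
  unfolding gg_def by (rule powr_less_mono2) auto



definition walk :: "'a set \<Rightarrow> 'a set set \<Rightarrow> 'a list \<Rightarrow> bool" where
  "walk W F xs \<longleftrightarrow> distinct xs \<and> set xs \<subseteq> W \<and> (\<forall>i. Suc i < length xs \<longrightarrow> {xs!i, xs!Suc i} \<in> F)"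

lemma has_cycle_mono: "has_cycle W' F \<Longrightarrow> W' \<subseteq> W \<Longrightarrow> has_cycle W F"
  unfolding has_cycle_def by blast

lemma walk_cycle:
  assumes "walk W F xs" "2 \<le> j" "j < length xs" "{xs!0, xs!j} \<in> F"
  shows "has_cycle W F"
proof -
  let ?ys = "take (Suc j) xs"
  have len: "length ?ys = Suc j" using assms by simp
  have "\<forall>i < length ?ys. {?ys ! i, ?ys ! ((i + 1) mod length ?ys)} \<in> F"
  proof (intro allI impI)
    fix i assume i: "i < length ?ys"
    show "{?ys ! i, ?ys ! ((i + 1) mod length ?ys)} \<in> F"
    proof (cases "i = j")
      case True
      then show ?thesis using assms len by (simp add: insert_commute)
    next
      case False
      then have "i < j" using i len by simp
      then show ?thesis using assms len unfolding walk_def by simp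
    qed
  qed
  moreover have "distinct ?ys" "set ?ys \<subseteq> W" using assms unfolding walk_def
    by (auto dest: in_set_takeD)
  moreover have "length ?ys \<ge> 3" using len assms by simp
  ultimately show ?thesis unfolding has_cycle_def by blast
qed

lemma walk_Cons:
  assumes "walk W F xs" "xs \<noteq> []" "y \<in> W" "y \<notin> set xs" "{y, xs!0} \<in> F"
  shows "walk W F (y # xs)"
  unfolding walk_def
proof (intro conjI allI impI)
  show "distinct (y # xs)" "set (y#xs) \<subseteq> W" using assms unfolding walk_def by auto
  fix i assume i: "Suc i < length (y # xs)"
  show "{(y # xs) ! i, (y # xs) ! Suc i} \<in> F"
  proof (cases i)
    case 0 then show ?thesis using assms by simp
  next
    case (Suc j) then show ?thesis using assms i unfolding walk_def by simp
  qed
qed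

lemma walk_snoc:
  assumes "walk W F xs" "xs \<noteq> []" "y \<in> W" "y \<notin> set xs" "{xs!(length xs - 1), y} \<in> F"
  shows "walk W F (xs @ [y])"
  unfolding walk_def
proof (intro conjI allI impI)
  show "distinct (xs @ [y])" "set (xs @ [y]) \<subseteq> W" using assms unfolding walk_def by auto
  fix i assume i: "Suc i < length (xs @ [y])"
  show "{(xs @ [y]) ! i, (xs @ [y]) ! Suc i} \<in> F"
  proof (cases "Suc i < length xs")
    case True then show ?thesis using assms unfolding walk_def by (simp add: nth_append)
  next
    case False
    then have "Suc i = length xs" using i by simp
    then have "i = length xs - 1" by simp
    then show ?thesis using assms \<open>Suc i = length xs\<close> by (simp add: nth_append)
  qed
qed

lemma max_walk:
  assumes "finite W" "w \<in> W"
  obtains xs where "walk W F xs" "xs \<noteq> []" "\<And>ys. walk W F ys \<Longrightarrow> length ys \<le> length xs"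
proof -
  have w: "walk W F [w]" using assms unfolding walk_def by simp
  have b: "\<forall>ys. walk W F ys \<longrightarrow> length ys < Suc (card W)"
  proof (intro allI impI)
    fix ys assume "walk W F ys"
    then have "length ys = card (set ys)" "set ys \<subseteq> W" unfolding walk_def
      by (auto simp: distinct_card)
    moreover have "card (set ys) \<le> card W" using card_mono[OF assms(1)] calculation(2) by blast
    ultimately show "length ys < Suc (card W)" by simp
  qed
  from ex_has_greatest_nat[of "walk W F" "[w]" length, OF w b] obtain xs where
    xs: "walk W F xs" "\<forall>ys. walk W F ys \<longrightarrow> length ys \<le> length xs" by blast
  have "length [w] \<le> length xs" using xs(2) w by blast
  then have "xs \<noteq> []" by auto
  then show ?thesis using that xs by blast
qed

lemma nbr_two:
  assumes "finite W" "2 \<le> card {u\<in>W. {u,x} \<in> F}"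
  shows "\<exists>y. y \<in> W \<and> {y,x} \<in> F \<and> y \<noteq> z"
proof (rule ccontr)
  assume "\<not> ?thesis"
  then have "{u\<in>W. {u,x} \<in> F} \<subseteq> {z}" by auto
  then have "card {u\<in>W. {u,x} \<in> F} \<le> 1" using card_mono[of "{z}"] by fastforce
  then show False using assms by simp
qed

lemma leaf_exists:
  assumes "finite W" "W \<noteq> {}" "\<not> has_cycle W F" "\<And>v. {v} \<notin> F"
  shows "\<exists>v\<in>W. card {u\<in>W. {u,v} \<in> F} \<le> 1"
proof (rule ccontr)
  assume "\<not> ?thesis"
  then have deg: "\<And>v. v \<in> W \<Longrightarrow> 2 \<le> card {u\<in>W. {u,v} \<in> F}" by force
  obtain w where "w \<in> W" using assms by blast
  then obtain xs where xs: "walk W F xs" "xs \<noteq> []" "\<And>ys. walk W F ys \<Longrightarrow> length ys \<le> length xs"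
    using max_walk assms(1) by metis
  have x0: "xs!0 \<in> W" using xs unfolding walk_def by auto
  obtain y where y: "y \<in> W" "{y, xs!0} \<in> F" "y \<noteq> xs!1"
    using nbr_two[OF assms(1) deg[OF x0]] by blast
  have "y \<noteq> xs!0" using y assms(4) by force
  show False
  proof (cases "y \<in> set xs")
    case False
    then have "walk W F (y # xs)" using walk_Cons xs y by metis
    then show False using xs(3) by fastforce
  next
    case True
    then obtain j where j: "j < length xs" "xs!j = y" by (auto simp: in_set_conv_nth)
    then have "j \<ge> 2" using y \<open>y \<noteq> xs!0\<close>
      by (metis One_nat_def less_2_cases not_less)
    then show False using walk_cycle[OF xs(1) _ j(1)] j y assms(3) by (simp add: insert_commute)
  qed
qed

lemma forest_sum:
  assumes "finite W" "W \<noteq> {}" "\<not> has_cycle W F" "\<And>v. {v} \<notin> F"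
  shows "(\<Sum>v\<in>W. card {u\<in>W. {u,v} \<in> F}) \<le> 2 * (card W - 1)"
  using assms
proof (induction "card W" arbitrary: W)
  case 0 then show ?case by simp
next
  case (Suc c)
  obtain v where v: "v \<in> W" "card {u\<in>W. {u,v} \<in> F} \<le> 1"
    using leaf_exists Suc.prems by blast
  let ?W = "W - {v}"
  show ?case
  proof (cases "?W = {}")
    case True
    then have "W = {v}" using v by auto
    then show ?thesis using Suc.prems(4) by simp
  next
    case False
    have fW: "finite ?W" using Suc.prems by simp
    have cW: "card ?W = c" using Suc.hyps v by simp
    have IH: "(\<Sum>u\<in>?W. card {w\<in>?W. {w,u} \<in> F}) \<le> 2 * (card ?W - 1)"
      using Suc.hyps(1)[OF cW[symmetric] fW False] Suc.prems has_cycle_mono by blast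
    have split: "card {w\<in>W. {w,u} \<in> F} = card {w\<in>?W. {w,u} \<in> F} + (if {v,u} \<in> F then 1 else 0)"
      if u: "u \<in> ?W" for u
    proof -
      have "{w\<in>W. {w,u} \<in> F} = {w\<in>?W. {w,u} \<in> F} \<union> (if {v,u} \<in> F then {v} else {})"
        using v u by auto
      then show ?thesis using Suc.prems(1) by (auto simp: card_insert_if)
    qed
    have s2: "(\<Sum>u\<in>?W. (if {v,u} \<in> F then 1 else 0::nat)) = card {u\<in>W. {u,v} \<in> F}"
    proof -
      have "(\<Sum>u\<in>?W. (if {v,u} \<in> F then 1 else 0::nat)) = card {u\<in>?W. {v,u} \<in> F}"
        using fW by (simp add: sum.If_cases) (rule arg_cong[where f=card]; auto)
      also have "{u\<in>?W. {v,u} \<in> F} = {u\<in>W. {u,v} \<in> F}"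
        using Suc.prems(4) by (auto simp: insert_commute)
      finally show ?thesis .
    qed
    have "(\<Sum>u\<in>W. card {w\<in>W. {w,u} \<in> F}) = card {u\<in>W. {u,v} \<in> F} + (\<Sum>u\<in>?W. card {w\<in>W. {w,u} \<in> F})"
      using Suc.prems(1) v by (simp add: sum.remove)
    also have "(\<Sum>u\<in>?W. card {w\<in>W. {w,u} \<in> F}) = (\<Sum>u\<in>?W. card {w\<in>?W. {w,u} \<in> F}) + card {u\<in>W. {u,v} \<in> F}"
      using split s2 by (simp add: sum.distrib)
    finally have eq: "(\<Sum>u\<in>W. card {w\<in>W. {w,u} \<in> F}) = (\<Sum>u\<in>?W. card {w\<in>?W. {w,u} \<in> F}) + 2 * card {u\<in>W. {u,v} \<in> F}"
      by simp
    have "c \<noteq> 0" using cW False fW by auto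
    then show ?thesis using eq IH v(2) cW Suc.hyps(2) by linarith
  qed
qed



lemma two_le_card_eq:
  assumes "finite N" "a \<in> N" "b \<in> N" "a \<noteq> b" "card N \<le> 2" "y \<in> N"
  shows "y = a \<or> y = b"
proof -
  have "{a,b} \<subseteq> N" using assms by auto
  moreover have "card {a,b} = 2" using assms by simp
  moreover have "card {a,b} \<le> card N" using card_mono[OF assms(1) calculation(1)] .
  ultimately have "{a,b} = N" using card_subset_eq[OF assms(1)] assms(5) by simp
  then show ?thesis using assms by auto
qed

lemma path_structure:
  assumes fin: "finite W" and ne: "W \<noteq> {}" and nc: "\<not> has_cycle W F" and nl: "\<And>v. {v} \<notin> F"
    and sub: "\<And>e. e \<in> F \<Longrightarrow> e \<subseteq> W"
    and conn: "\<forall>u\<in>W. \<forall>v\<in>W. (\<lambda>x y. {x,y} \<in> F)\<^sup>*\<^sup>* u v"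
    and deg: "\<And>v. v \<in> W \<Longrightarrow> card {u\<in>W. {u,v} \<in> F} \<le> 2"
  shows "\<exists>xs. distinct xs \<and> set xs = W \<and>
     (\<forall>i<length xs. \<forall>j<length xs. {xs!i, xs!j} \<in> F \<longleftrightarrow> (i = Suc j \<or> j = Suc i))"
proof -
  obtain w where "w \<in> W" using ne by blast
  then obtain xs where xs: "walk W F xs" "xs \<noteq> []" "\<And>ys. walk W F ys \<Longrightarrow> length ys \<le> length xs"
    using max_walk fin by metis
  let ?L = "length xs"
  have dist: "distinct xs" and setW: "set xs \<subseteq> W"
    and adj: "\<And>i. Suc i < ?L \<Longrightarrow> {xs!i, xs!Suc i} \<in> F"
    using xs(1) unfolding walk_def by auto
  have inW: "\<And>i. i < ?L \<Longrightarrow> xs!i \<in> W" using setW by auto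
  have interior: "y = xs!(i-1) \<or> y = xs!(Suc i)"
    if i: "0 < i" "Suc i < ?L" and y: "y \<in> W" "{y, xs!i} \<in> F" for i y
  proof -
    have a: "xs!(i-1) \<in> {u\<in>W. {u, xs!i} \<in> F}"
      using adj[of "i-1"] i inW[of "i-1"] by simp
    have b: "xs!(Suc i) \<in> {u\<in>W. {u, xs!i} \<in> F}"
      using adj[of i] i inW[of "Suc i"] by (simp add: insert_commute)
    have "xs!(i-1) \<noteq> xs!(Suc i)" using dist i by (simp add: nth_eq_iff_index_eq)
    moreover have "finite {u\<in>W. {u, xs!i} \<in> F}" using fin by simp
    moreover have "card {u\<in>W. {u, xs!i} \<in> F} \<le> 2" using deg inW i by simp
    moreover have "y \<in> {u\<in>W. {u, xs!i} \<in> F}" using y by simp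
    ultimately show ?thesis using two_le_card_eq[OF _ a b] by blast
  qed
  have closed: "y \<in> set xs" if i: "i < ?L" and y: "y \<in> W" "{y, xs!i} \<in> F" for i y
  proof (rule ccontr)
    assume yn: "y \<notin> set xs"
    show False
    proof (cases "i = 0")
      case True
      then have "walk W F (y # xs)" using walk_Cons xs y yn by metis
      then show False using xs(3) by fastforce
    next
      case False
      show False
      proof (cases "Suc i = ?L")
        case True
        then have "i = ?L - 1" by simp
        then have "walk W F (xs @ [y])" using walk_snoc[OF xs(1,2) y(1) yn] y by (simp add: insert_commute)
        then show False using xs(3) by fastforce
      next
        case False
        then have "Suc i < ?L" using i by simp
        then show False using interior[of i y] \<open>i \<noteq> 0\<close> y yn i by auto
      qed
    qed
  qed
  have reach: "(\<lambda>x y. {x,y} \<in> F)\<^sup>*\<^sup>* (xs!0) v \<Longrightarrow> v \<in> set xs" for v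
  proof (induction rule: rtranclp_induct)
    case base then show ?case using xs(2) by simp
  next
    case (step x y)
    then obtain i where "i < ?L" "xs!i = x" by (auto simp: in_set_conv_nth)
    moreover have "y \<in> W" using sub[OF step(2)] by auto
    ultimately show ?case using closed step(2) by (auto simp: insert_commute)
  qed
  have "set xs = W"
  proof
    show "W \<subseteq> set xs" using reach conn inW xs(2) by blast
  qed (rule setW)
  moreover have "\<forall>i<?L. \<forall>j<?L. {xs!i, xs!j} \<in> F \<longleftrightarrow> (i = Suc j \<or> j = Suc i)"
  proof (intro allI impI)
    fix i j assume ij: "i < ?L" "j < ?L"
    have one: "{xs!i, xs!j} \<in> F \<Longrightarrow> j = Suc i" if "i < j" "i < ?L" "j < ?L" for i j
    proof -
      assume e: "{xs!i, xs!j} \<in> F"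
      show "j = Suc i"
      proof (rule ccontr)
        assume "j \<noteq> Suc i"
        then have j2: "Suc i < j" using that by simp
        show False
        proof (cases "i = 0")
          case True
          then show False using walk_cycle[OF xs(1), of j] j2 that e nc by simp
        next
          case False
          have "xs!j = xs!(i-1) \<or> xs!j = xs!(Suc i)"
            using interior[of i "xs!j"] False j2 that inW e by (simp add: insert_commute)
          then show False using dist j2 that False by (auto simp: nth_eq_iff_index_eq)
        qed
      qed
    qed
    show "{xs!i, xs!j} \<in> F \<longleftrightarrow> (i = Suc j \<or> j = Suc i)"
    proof
      assume e: "{xs!i, xs!j} \<in> F"
      have "i \<noteq> j" using e nl by auto
      then show "i = Suc j \<or> j = Suc i"
        using one[of i j] one[of j i] e ij by (auto simp: insert_commute linorder_neq_iff)
    next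
      assume "i = Suc j \<or> j = Suc i"
      then show "{xs!i, xs!j} \<in> F" using adj ij by (auto simp: insert_commute)
    qed
  qed
  ultimately show ?thesis using dist by blast
qed



lemma join_V: "fst (graph_join (complete_graph k) (path_graph m)) = Inl ` {0..<k} \<union> Inr ` {0..<m}"
  unfolding graph_join_def complete_graph_def path_graph_def by simp

lemma join_E: "snd (graph_join (complete_graph k) (path_graph m)) =
   ((`) Inl) ` {{i, j} | i j. i < k \<and> j < k \<and> i \<noteq> j} \<union> ((`) Inr) ` {{i, i + 1} | i. i + 1 < m}
   \<union> {{Inl u, Inr v} | u v. u \<in> {0..<k} \<and> v \<in> {0..<m}}"
  unfolding graph_join_def complete_graph_def path_graph_def by simp

lemma img_dbl: "inj f \<Longrightarrow> (f ` e = {f a, f b}) \<longleftrightarrow> e = {a, b}"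
proof -
  assume "inj f"
  have "{f a, f b} = f ` {a,b}" by simp
  then have "(f ` e = {f a, f b}) \<longleftrightarrow> f ` e = f ` {a,b}" by simp
  also have "\<dots> \<longleftrightarrow> e = {a,b}" using \<open>inj f\<close> by (rule inj_image_eq_iff)
  finally show ?thesis .
qed

lemma mem_img_dbl: "inj f \<Longrightarrow> {f a, f b} \<in> ((`) f) ` C \<longleftrightarrow> {a,b} \<in> C"
proof
  assume "inj f" "{f a, f b} \<in> ((`) f) ` C"
  then obtain e where "e \<in> C" "f ` e = {f a, f b}" by auto
  then show "{a,b} \<in> C" using img_dbl[OF \<open>inj f\<close>] by metis
next
  assume "{a,b} \<in> C"
  then show "{f a, f b} \<in> ((`) f) ` C" by (metis image_empty image_eqI image_insert)
qed

lemma join_LL: "{Inl a, Inl b} \<in> snd (graph_join (complete_graph k) (path_graph m)) \<longleftrightarrow> a<k \<and> b<k \<and> a\<noteq>b"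
proof -
  have 1: "{Inl a, Inl b} \<notin> ((`) Inr) ` C" for C :: "nat set set" by auto
  have 2: "{Inl a, Inl b} \<notin> {{Inl u, Inr v} | u v. u \<in> {0..<k} \<and> v \<in> {0..<m}}"
    by (auto simp: doubleton_eq_iff)
  have 3: "{a,b} \<in> {{i, j} | i j. i < k \<and> j < k \<and> i \<noteq> j} \<longleftrightarrow> a<k \<and> b<k \<and> a\<noteq>b"
    by (auto simp: doubleton_eq_iff)
  have "{Inl a, Inl b} \<in> snd (graph_join (complete_graph k) (path_graph m)) \<longleftrightarrow> {Inl a, Inl b} \<in> ((`) (Inl :: nat \<Rightarrow> nat + nat)) ` {{i, j} | i j. i < k \<and> j < k \<and> i \<noteq> j}"
    by (simp only: join_E Un_iff 1 2 simp_thms refl)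
  also have "\<dots> \<longleftrightarrow> {a,b} \<in> {{i, j} | i j. i < k \<and> j < k \<and> i \<noteq> j}" by (rule mem_img_dbl) simp
  finally show ?thesis using 3 by simp
qed

lemma join_RR: "{Inr a, Inr b} \<in> snd (graph_join (complete_graph k) (path_graph m)) \<longleftrightarrow> a<m \<and> b<m \<and> (a = Suc b \<or> b = Suc a)"
proof -
  have 1: "{Inr a, Inr b} \<notin> ((`) Inl) ` C" for C :: "nat set set" by auto
  have 2: "{Inr a, Inr b} \<notin> {{Inl u, Inr v} | u v. u \<in> {0..<k} \<and> v \<in> {0..<m}}"
    by (auto simp: doubleton_eq_iff)
  have 3: "{a,b} \<in> {{i, i + 1} | i. i + 1 < m} \<longleftrightarrow> a<m \<and> b<m \<and> (a = Suc b \<or> b = Suc a)"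
    by (auto simp: doubleton_eq_iff)
  have "{Inr a, Inr b} \<in> snd (graph_join (complete_graph k) (path_graph m)) \<longleftrightarrow> {Inr a, Inr b} \<in> ((`) (Inr :: nat \<Rightarrow> nat + nat)) ` {{i, i + 1} | i. i + 1 < m}"
    by (simp only: join_E Un_iff 1 2 simp_thms refl)
  also have "\<dots> \<longleftrightarrow> {a,b} \<in> {{i, i + 1} | i. i + 1 < m}" by (rule mem_img_dbl) simp
  finally show ?thesis using 3 by simp
qed

lemma join_LR: "{Inl a, Inr b} \<in> snd (graph_join (complete_graph k) (path_graph m)) \<longleftrightarrow> a<k \<and> b<m"
proof -
  have 1: "{Inl a, Inr b} \<notin> ((`) Inl) ` C" for C :: "nat set set" by auto
  have 2: "{Inl a, Inr b} \<notin> ((`) Inr) ` C" for C :: "nat set set" by auto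
  have 3: "{Inl a, Inr b} \<in> {{Inl u, Inr v} | u v. u \<in> {0..<k} \<and> v \<in> {0..<m}} \<longleftrightarrow> a<k \<and> b<m"
    by (auto simp: doubleton_eq_iff)
  show ?thesis unfolding join_E using 1 2 3 by blast
qed

lemma join_RL: "{Inr b, Inl a} \<in> snd (graph_join (complete_graph k) (path_graph m)) \<longleftrightarrow> a<k \<and> b<m"
  using join_LR by (metis insert_commute)



abbreviation "VH k m \<equiv> fst (graph_join (complete_graph k) (path_graph m))"
abbreviation "EH k m \<equiv> snd (graph_join (complete_graph k) (path_graph m))"

lemma degL: assumes "a < k" shows "degree (VH k m) (EH k m) (Inl a) = k - 1 + m"
proof -
  have "{u \<in> VH k m. {u, Inl a} \<in> EH k m} = Inl ` ({0..<k} - {a}) \<union> Inr ` {0..<m}"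
  proof (rule set_eqI)
    fix u :: "nat + nat"
    show "u \<in> {u \<in> VH k m. {u, Inl a} \<in> EH k m} \<longleftrightarrow> u \<in> Inl ` ({0..<k} - {a}) \<union> Inr ` {0..<m}"
      using assms by (cases u) (auto simp: join_V join_LL join_RL)
  qed
  moreover have "card (Inl ` ({0..<k} - {a}) \<union> (Inr ` {0..<m} :: (nat+nat) set)) = k - 1 + m"
    using assms by (subst card_Un_disjoint) (auto simp: card_image)
  ultimately show ?thesis unfolding degree_def by simp
qed

lemma degR: assumes "b < m" shows "degree (VH k m) (EH k m) (Inr b) = k + card {c. c < m \<and> (c = Suc b \<or> b = Suc c)}"
proof -
  have "{u \<in> VH k m. {u, Inr b} \<in> EH k m} = Inl ` {0..<k} \<union> Inr ` {c. c < m \<and> (c = Suc b \<or> b = Suc c)}"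
  proof (rule set_eqI)
    fix u :: "nat + nat"
    show "u \<in> {u \<in> VH k m. {u, Inr b} \<in> EH k m} \<longleftrightarrow> u \<in> Inl ` {0..<k} \<union> Inr ` {c. c < m \<and> (c = Suc b \<or> b = Suc c)}"
      using assms by (cases u) (auto simp: join_V join_LR join_RR)
  qed
  moreover have "card (Inl ` {0..<k} \<union> (Inr ` {c. c < m \<and> (c = Suc b \<or> b = Suc c)} :: (nat+nat) set)) = k + card {c. c < m \<and> (c = Suc b \<or> b = Suc c)}"
    by (subst card_Un_disjoint) (auto simp: card_image)
  ultimately show ?thesis unfolding degree_def by simp
qed

lemma nbr_cnt:
  assumes "2 \<le> m" "b < m"
  shows "card {c. c < m \<and> (c = Suc b \<or> b = Suc c)} = (if b = 0 \<or> b = m - 1 then 1 else 2)"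
proof (cases "b = 0")
  case True
  then have "{c. c < m \<and> (c = Suc b \<or> b = Suc c)} = {1}" using assms by auto
  then show ?thesis using True by simp
next
  case False
  show ?thesis
  proof (cases "b = m - 1")
    case True
    then have "{c. c < m \<and> (c = Suc b \<or> b = Suc c)} = {b - 1}" using assms False by auto
    then show ?thesis using True by simp
  next
    case F2: False
    then have "{c. c < m \<and> (c = Suc b \<or> b = Suc c)} = {b - 1, Suc b}" using assms False by auto
    then show ?thesis using False F2 by simp
  qed
qed

lemma randic_H:
  assumes "2 \<le> m" "1 \<le> k"
  shows "randic0 \<alpha> (VH k m) (EH k m) = real k * real (k - 1 + m) powr \<alpha> + 2 * real (k+1) powr \<alpha>
     + (real m - 2) * real (k+2) powr \<alpha>"
proof -
  have s: "randic0 \<alpha> (VH k m) (EH k m) = (\<Sum>a\<in>{0..<k}. real (degree (VH k m) (EH k m) (Inl a)) powr \<alpha>)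
        + (\<Sum>b\<in>{0..<m}. real (degree (VH k m) (EH k m) (Inr b)) powr \<alpha>)"
    unfolding randic0_def join_V
    by (subst sum.union_disjoint) (auto simp: sum.reindex)
  have 1: "(\<Sum>a\<in>{0..<k}. real (degree (VH k m) (EH k m) (Inl a)) powr \<alpha>) = real k * real (k - 1 + m) powr \<alpha>"
    using assms by (simp add: degL of_nat_diff)
  have "(\<Sum>b\<in>{0..<m}. real (degree (VH k m) (EH k m) (Inr b)) powr \<alpha>)
      = (\<Sum>b\<in>{0..<m}. real (k + (if b = 0 \<or> b = m - 1 then 1 else 2)) powr \<alpha>)"
    by (rule sum.cong) (auto simp: degR nbr_cnt assms)
  also have setq: "{0..<m} = insert 0 (insert (m-1) {1..<m-1})" using assms by auto
  also have "(\<Sum>b\<in>insert 0 (insert (m-1) {1..<m-1}). real (k + (if b = 0 \<or> b = m - 1 then 1 else 2)) powr \<alpha>)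
     = 2 * real (k+1) powr \<alpha> + (real m - 2) * real (k+2) powr \<alpha>"
  proof -
    have "(\<Sum>b\<in>{1..<m-1}. real (k + (if b = 0 \<or> b = m - 1 then 1 else 2)) powr \<alpha>)
          = (\<Sum>b\<in>{1..<m-1}. real (k+2) powr \<alpha>)" by (rule sum.cong) auto
    also have "\<dots> = (real m - 2) * real (k+2) powr \<alpha>" using assms by (simp add: of_nat_diff)
    finally show ?thesis using assms by (simp add: add_ac)
  qed
  finally show ?thesis using s 1 setq by simp
qed

lemma iso_randic:
  assumes "finite V" "graph_iso V E H"
  shows "randic0 \<alpha> V E = randic0 \<alpha> (fst H) (snd H)"
proof -
  obtain f where f: "bij_betw f V (fst H)" "\<forall>u\<in>V. \<forall>v\<in>V. {u, v} \<in> E \<longleftrightarrow> {f u, f v} \<in> snd H"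
    using assms unfolding graph_iso_def by blast
  have deg: "degree V E v = degree (fst H) (snd H) (f v)" if v: "v \<in> V" for v
  proof -
    have im: "f ` V = fst H" and inj: "inj_on f V" using f(1) by (auto simp: bij_betw_def)
    have "f ` {u\<in>V. {u,v} \<in> E} = {w \<in> fst H. {w, f v} \<in> snd H}"
    proof
      show "f ` {u\<in>V. {u,v} \<in> E} \<subseteq> {w \<in> fst H. {w, f v} \<in> snd H}"
      proof
        fix w assume "w \<in> f ` {u\<in>V. {u,v} \<in> E}"
        then obtain u where u: "u \<in> V" "{u,v} \<in> E" "w = f u" by blast
        have "{f u, f v} \<in> snd H" using f(2) u v by blast
        moreover have "f u \<in> fst H" using im u by blast
        ultimately show "w \<in> {w \<in> fst H. {w, f v} \<in> snd H}" using u by simp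
      qed
    next
      show "{w \<in> fst H. {w, f v} \<in> snd H} \<subseteq> f ` {u\<in>V. {u,v} \<in> E}"
      proof
        fix w assume w: "w \<in> {w \<in> fst H. {w, f v} \<in> snd H}"
        then have "w \<in> f ` V" using im by simp
        then obtain u where u: "u \<in> V" "w = f u" by blast
        have "{u,v} \<in> E" using f(2) u v w by simp
        then show "w \<in> f ` {u\<in>V. {u,v} \<in> E}" using u by blast
      qed
    qed
    moreover have "inj_on f {u\<in>V. {u,v} \<in> E}" using inj by (rule inj_on_subset) blast
    ultimately have "card {w \<in> fst H. {w, f v} \<in> snd H} = card {u\<in>V. {u,v} \<in> E}"
      using card_image by fastforce
    then show ?thesis unfolding degree_def by (rule sym)
  qed
  have "randic0 \<alpha> (fst H) (snd H) = (\<Sum>v\<in>V. real (degree (fst H) (snd H) (f v)) powr \<alpha>)"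
    unfolding randic0_def by (rule sum.reindex_bij_betw[OF f(1), symmetric])
  then show ?thesis unfolding randic0_def using deg by simp
qed



lemma build_iso:
  assumes fin: "finite V" and SV: "S \<subseteq> V" and cS: "card S = k"
    and dist: "distinct xs" and setx: "set xs = V - S"
    and adjT: "\<forall>i<length xs. \<forall>j<length xs. {xs!i, xs!j} \<in> E \<longleftrightarrow> (i = Suc j \<or> j = Suc i)"
    and adjS: "\<forall>s\<in>S. \<forall>u\<in>V. u \<noteq> s \<longrightarrow> {u,s} \<in> E"
    and nl: "\<forall>v. {v} \<notin> E"
  shows "graph_iso V E (graph_join (complete_graph k) (path_graph (length xs)))"
proof -
  let ?L = "length xs"
  have finS: "finite S" using fin SV finite_subset by blast
  obtain h where h: "bij_betw h S {0..<k}" using ex_bij_betw_finite_nat[OF finS] cS by blast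
  have bn: "bij_betw (nth xs) {..<?L} (set xs)" using bij_betw_nth[OF dist] by simp
  define g where "g = inv_into {..<?L} (nth xs)"
  have gb: "bij_betw g (set xs) {..<?L}" unfolding g_def by (rule bij_betw_inv_into[OF bn])
  have xg: "xs ! (g v) = v" if "v \<in> set xs" for v
    unfolding g_def using that bn by (simp add: bij_betw_def f_inv_into_f)
  have gL: "g v < ?L" if "v \<in> set xs" for v using bij_betwE[OF gb] that by blast
  have hk: "h v < k" if "v \<in> S" for v using bij_betwE[OF h] that by simp
  have hinj: "inj_on h S" using bij_betw_imp_inj_on[OF h] .
  have ginj: "inj_on g (set xs)" using bij_betw_imp_inj_on[OF gb] .
  define f where "f v = (if v \<in> S then Inl (h v) else Inr (g v))" for v
  have "bij_betw f V (Inl ` {0..<k} \<union> Inr ` {0..<?L})"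
    unfolding bij_betw_def
  proof
    show "inj_on f V"
    proof (rule inj_onI)
      fix u v assume uv: "u \<in> V" "v \<in> V" "f u = f v"
      show "u = v"
      proof (cases "u \<in> S"; cases "v \<in> S")
        assume a: "u \<in> S" "v \<in> S" then have "h u = h v" using uv unfolding f_def by simp
        then show ?thesis using inj_onD[OF hinj _ a] by blast
      next
        assume "u \<in> S" "v \<notin> S" then show ?thesis using uv unfolding f_def by simp
      next
        assume "u \<notin> S" "v \<in> S" then show ?thesis using uv unfolding f_def by simp
      next
        assume a: "u \<notin> S" "v \<notin> S" then have "g u = g v" using uv unfolding f_def by simp
        moreover have "u \<in> set xs" "v \<in> set xs" using a uv setx by auto
        ultimately show ?thesis using inj_onD[OF ginj] by blast
      qed
    qed
  next
    have VV: "V = S \<union> (V - S)" using SV by blast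
    have "f ` V = f ` S \<union> f ` (V - S)" by (subst VV) (rule image_Un)
    also have "f ` S = Inl ` (h ` S)"
    proof -
      have "f ` S = (\<lambda>v. Inl (h v)) ` S" by (rule image_cong) (simp_all add: f_def)
      then show ?thesis by (simp add: image_image)
    qed
    also have "f ` (V - S) = Inr ` (g ` set xs)"
    proof -
      have "f ` (V - S) = (\<lambda>v. Inr (g v)) ` (V - S)" by (rule image_cong) (simp_all add: f_def)
      then show ?thesis using setx by (simp add: image_image)
    qed
    also have "h ` S = {0..<k}" using bij_betw_imp_surj_on[OF h] .
    also have "g ` set xs = {0..<?L}" using gb by (simp add: bij_betw_def lessThan_atLeast0)
    finally show "f ` V = Inl ` {0..<k} \<union> Inr ` {0..<?L}" .
  qed
  moreover have "\<forall>u\<in>V. \<forall>v\<in>V. {u, v} \<in> E \<longleftrightarrow> {f u, f v} \<in> EH k ?L"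
  proof (intro ballI)
    fix u v assume u: "u \<in> V" and v: "v \<in> V"
    show "{u, v} \<in> E \<longleftrightarrow> {f u, f v} \<in> EH k ?L"
    proof (cases "u \<in> S"; cases "v \<in> S")
      assume a: "u \<in> S" "v \<in> S"
      have "{u, v} \<in> E \<longleftrightarrow> u \<noteq> v" using adjS nl a u by auto
      moreover have "h u = h v \<longleftrightarrow> u = v" using hinj a by (auto dest: inj_onD)
      ultimately show ?thesis using a hk unfolding f_def by (simp add: join_LL)
    next
      assume a: "u \<in> S" "v \<notin> S"
      have "{u, v} \<in> E" using adjS a v by (metis insert_commute)
      moreover have "v \<in> set xs" using setx a v by blast
      ultimately show ?thesis using a hk gL unfolding f_def by (simp add: join_LR)
    next
      assume a: "u \<notin> S" "v \<in> S"
      have "{u, v} \<in> E" using adjS a u by metis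
      moreover have "u \<in> set xs" using setx a u by blast
      ultimately show ?thesis using a hk gL unfolding f_def by (simp add: join_RL)
    next
      assume a: "u \<notin> S" "v \<notin> S"
      then have x: "u \<in> set xs" "v \<in> set xs" using setx u v by auto
      have "{u, v} \<in> E \<longleftrightarrow> {xs ! g u, xs ! g v} \<in> E" using xg x by simp
      also have "\<dots> \<longleftrightarrow> (g u = Suc (g v) \<or> g v = Suc (g u))" using adjT gL x by blast
      finally show ?thesis using a x gL unfolding f_def by (simp add: join_RR)
    qed
  qed
  ultimately show ?thesis unfolding graph_iso_def join_V by blast
qed



lemma sum_eq_le_imp:
  fixes f g :: "'b \<Rightarrow> real"
  assumes "finite A" "\<And>x. x \<in> A \<Longrightarrow> f x \<le> g x" "sum f A = sum g A" "x \<in> A"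
  shows "f x = g x"
proof -
  have "sum (\<lambda>x. g x - f x) A = sum g A - sum f A" by (rule sum_subtractf)
  then have z: "sum (\<lambda>x. g x - f x) A = 0" using assms(3) by linarith
  have nn: "\<And>x. x \<in> A \<Longrightarrow> 0 \<le> g x - f x" using assms(2) by simp
  have "(sum (\<lambda>x. g x - f x) A = 0) = (\<forall>x\<in>A. g x - f x = 0)"
    by (rule sum_nonneg_eq_0_iff[OF assms(1) nn])
  then have "g x - f x = 0" using z assms(4) by blast
  then show ?thesis by simp
qed

lemma two_vertex_tree:
  assumes "a \<noteq> b" "{a,b} \<in> F"
  shows "is_tree {a,b} F"
proof -
  have r: "(\<lambda>x y. {x,y} \<in> F)\<^sup>*\<^sup>* u v" if "u \<in> {a,b}" "v \<in> {a,b}" for u v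
  proof -
    have ab: "(\<lambda>x y. {x,y} \<in> F)\<^sup>*\<^sup>* a b" using assms(2) by (rule r_into_rtranclp)
    have ba: "(\<lambda>x y. {x,y} \<in> F)\<^sup>*\<^sup>* b a" using assms(2) by (simp add: insert_commute r_into_rtranclp)
    have "u = a \<or> u = b" "v = a \<or> v = b" using that by auto
    then show ?thesis using ab ba by (elim disjE) simp_all
  qed
  have nc: "\<not> has_cycle {a,b} F"
  proof
    assume "has_cycle {a,b} F"
    then obtain xs where xs: "length xs \<ge> 3" "distinct xs" "set xs \<subseteq> {a,b}" unfolding has_cycle_def by blast
    have "length xs = card (set xs)" using xs(2) by (simp add: distinct_card)
    also have "\<dots> \<le> card {a,b}" using xs(3) by (intro card_mono) auto
    also have "\<dots> \<le> 2" by (simp add: card_insert_if)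
    finally show False using xs(1) by simp
  qed
  show ?thesis unfolding is_tree_def connected_graph_def using r nc by blast
qed



theorem mainTheorem5:
  fixes V :: "'a set" and E :: "'a set set" and k n :: nat and \<alpha> :: real
  assumes "k \<ge> 1" and "n \<ge> 3" and "0 < \<alpha>" and "\<alpha> < 1"
    and "card V = n" and "gen_quasi_tree k V E"
  shows "randic0 \<alpha> V E \<le> real k * real (n - 1) powr \<alpha> + 2 * real (k + 1) powr \<alpha>
            + (real n - real k - 2) * real (k + 2) powr \<alpha>
       \<and> (randic0 \<alpha> V E = real k * real (n - 1) powr \<alpha> + 2 * real (k + 1) powr \<alpha>
            + (real n - real k - 2) * real (k + 2) powr \<alpha>
          \<longleftrightarrow> graph_iso V E (graph_join (complete_graph k) (path_graph (n - k))))"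
proof -
  have k1: "k \<ge> 1" and n3: "n \<ge> 3" and a0: "0 < \<alpha>" and a1: "\<alpha> < 1" and cV: "card V = n"
    using assms by auto
  have gq: "simple_graph V E \<and> connected_graph V E \<and>
     (\<exists>S. S \<subset> V \<and> card S = k \<and> is_tree (V - S) (del_verts V E S)) \<and>
     (\<forall>S. S \<subset> V \<and> card S = k - 1 \<longrightarrow> \<not> is_tree (V - S) (del_verts V E S))"
    using assms(6) unfolding gen_quasi_tree_def .
  have sg: "simple_graph V E" and conG: "connected_graph V E" using gq by auto
  obtain S where S: "S \<subset> V" "card S = k" "is_tree (V - S) (del_verts V E S)" using gq by blast
  have minimal: "\<And>S'. S' \<subset> V \<Longrightarrow> card S' = k - 1 \<Longrightarrow> \<not> is_tree (V - S') (del_verts V E S')"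
    using gq by blast
  have finV: "finite V" using sg unfolding simple_graph_def by blast
  have edge: "\<exists>u v. u \<in> V \<and> v \<in> V \<and> u \<noteq> v \<and> e = {u,v}" if "e \<in> E" for e
    using sg that unfolding simple_graph_def by blast
  have nl: "{v} \<notin> E" for v
  proof
    assume "{v} \<in> E"
    then obtain u w where "u \<noteq> w" "{v} = {u,w}" using edge by blast
    then show False by (metis doubleton_eq_iff insert_absorb2)
  qed
  have eV: "u \<in> V \<and> v \<in> V" if e: "{u,v} \<in> E" for u v
  proof -
    obtain a b where ab: "a \<in> V" "b \<in> V" "{u,v} = {a,b}" using edge[OF e] by blast
    have "u \<in> {a,b}" "v \<in> {a,b}" using ab(3) by (metis insertI1, metis insertI1 insert_commute)
    then show ?thesis using ab by auto
  qed
  define T where "T = V - S"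
  define ET where "ET = del_verts V E S"
  have finS: "finite S" using S(1) finV finite_subset by auto
  have finT: "finite T" unfolding T_def using finV by simp
  have ETiff: "{u,v} \<in> ET \<longleftrightarrow> {u,v} \<in> E" if "u \<in> T" "v \<in> T" for u v
    using that unfolding ET_def del_verts_def T_def by auto
  have ETE: "e \<in> ET \<Longrightarrow> e \<in> E" for e unfolding ET_def del_verts_def by simp
  have ETsub: "e \<subseteq> T" if "e \<in> ET" for e
  proof -
    have "e \<in> E" "e \<inter> S = {}" using that unfolding ET_def del_verts_def by auto
    then obtain a b where "a \<in> V" "b \<in> V" "e = {a,b}" using edge by blast
    then show ?thesis using \<open>e \<inter> S = {}\<close> unfolding T_def by auto
  qed
  have ETnl: "{v} \<notin> ET" for v using nl ETE by blast
  have connT: "connected_graph T ET" and ncT: "\<not> has_cycle T ET"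
    using S(3) unfolding is_tree_def T_def ET_def by auto
  have kn: "k < n" using psubset_card_mono[OF finV S(1)] S(2) cV by simp
  have cT: "card T = n - k" unfolding T_def using S finV cV by (simp add: card_Diff_subset finS)
  have TV: "T \<subseteq> V" "S \<subseteq> V" unfolding T_def using S(1) by auto
  have Tne: "T \<noteq> {}" using connT unfolding connected_graph_def by blast
  have m2: "card T \<ge> 2"
  proof (rule ccontr)
    assume "\<not> card T \<ge> 2"
    moreover have "card T \<noteq> 0" using Tne finT by simp
    ultimately have nk: "n = k + 1" using cT kn by simp
    obtain a where a: "a \<in> V" using n3 cV by (metis card.empty ex_in_conv not_numeral_le_zero)
    have "card (V - {a}) \<ge> 2" using a cV n3 finV by simp
    then obtain b where b: "b \<in> V - {a}" by (metis card.empty ex_in_conv not_numeral_le_zero)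
    have "(\<lambda>x y. {x,y} \<in> E)\<^sup>*\<^sup>* a b" using conG a b unfolding connected_graph_def by blast
    then obtain w where w: "{a,w} \<in> E"
    proof (cases rule: converse_rtranclpE)
      case base then show ?thesis using b by simp
    next
      case (step w) then show ?thesis using that by blast
    qed
    have wV: "w \<in> V" "a \<noteq> w" using eV[OF w] nl w by auto
    define S' where "S' = V - {a,w}"
    have cS': "card S' = k - 1" unfolding S'_def using a wV finV cV nk by (simp add: card_Diff_subset)
    have pS': "S' \<subset> V" unfolding S'_def using a by auto
    have VS': "V - S' = {a,w}" unfolding S'_def using a wV by auto
    have "{a,w} \<inter> S' = {}" unfolding S'_def by blast
    then have "{a,w} \<in> del_verts V E S'" unfolding del_verts_def using w by simp
    from two_vertex_tree[OF wV(2) this]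
    have "is_tree (V - S') (del_verts V E S')" by (simp only: VS')
    then show False using minimal[OF pS' cS'] by (rule notE[rotated])
  qed
  define d where "d v = card {u\<in>T. {u,v} \<in> E}" for v
  have dET: "card {u\<in>T. {u,v} \<in> ET} = d v" if v: "v \<in> T" for v
  proof -
    have "{u\<in>T. {u,v} \<in> ET} = {u\<in>T. {u,v} \<in> E}" using ETiff v by blast
    then show ?thesis unfolding d_def by simp
  qed
  have sumd: "(\<Sum>v\<in>T. d v) \<le> 2 * (card T - 1)"
  proof -
    have "(\<Sum>v\<in>T. card {u\<in>T. {u,v} \<in> ET}) \<le> 2 * (card T - 1)"
      by (rule forest_sum[OF finT Tne ncT ETnl])
    moreover have "(\<Sum>v\<in>T. card {u\<in>T. {u,v} \<in> ET}) = (\<Sum>v\<in>T. d v)"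
      by (rule sum.cong) (simp_all add: dET)
    ultimately show ?thesis by simp
  qed
  have d1: "1 \<le> d v" if v: "v \<in> T" for v
  proof -
    have "card (T - {v}) \<ge> 1" using m2 v finT by simp
    then obtain u where u: "u \<in> T - {v}" by (metis card.empty ex_in_conv not_one_le_zero)
    have "(\<lambda>x y. {x,y} \<in> ET)\<^sup>*\<^sup>* v u" using connT v u unfolding connected_graph_def by blast
    then obtain w where w: "{v,w} \<in> ET"
    proof (cases rule: converse_rtranclpE)
      case base then show ?thesis using u by simp
    next
      case (step w) then show ?thesis using that by blast
    qed
    have "w \<in> T" using ETsub[OF w] by simp
    moreover have "{w,v} \<in> ET" using w by (simp add: insert_commute)
    ultimately have "w \<in> {u\<in>T. {u,v} \<in> ET}" by simp
    then have "card {u\<in>T. {u,v} \<in> ET} \<noteq> 0" using finT by auto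
    then show ?thesis using dET[OF v] by simp
  qed
  have degS: "degree V E v \<le> n - 1" if v: "v \<in> V" for v
  proof -
    have "{u\<in>V. {u,v} \<in> E} \<subseteq> V - {v}" using nl by auto
    then have "degree V E v \<le> card (V - {v})" unfolding degree_def using finV by (intro card_mono) auto
    then show ?thesis using v cV finV by simp
  qed
  have degT: "degree V E v \<le> d v + k" if v: "v \<in> T" for v
  proof -
    have "{u\<in>V. {u,v} \<in> E} \<subseteq> {u\<in>T. {u,v} \<in> E} \<union> S" unfolding T_def by blast
    then have "degree V E v \<le> card ({u\<in>T. {u,v} \<in> E} \<union> S)" unfolding degree_def
      using finT finS by (intro card_mono) auto
    also have "\<dots> \<le> d v + card S" unfolding d_def by (rule card_Un_le)
    finally show ?thesis using S(2) by simp
  qed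
  define g1 where "g1 = gg k \<alpha> 1"
  define g2 where "g2 = gg k \<alpha> 2"
  have g12: "g1 < g2" unfolding g1_def g2_def using g_mono[OF a0] .
  define A where "A v = real (degree V E v) powr \<alpha>" for v
  define B where "B v = (if v \<in> S then real (n - 1) powr \<alpha> else g2 + (real (d v) - 2) * (g2 - g1))" for v
  define R where "R = real k * real (n - 1) powr \<alpha> + 2 * real (k + 1) powr \<alpha>
            + (real n - real k - 2) * real (k + 2) powr \<alpha>"
  have AgT: "A v \<le> gg k \<alpha> (d v)" if v: "v \<in> T" for v
    unfolding A_def gg_def using degT[OF v] a0 by (intro powr_mono2) auto
  have gB: "gg k \<alpha> (d v) \<le> B v \<and> (d v \<ge> 3 \<longrightarrow> gg k \<alpha> (d v) < B v)" if v: "v \<in> T" for v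
  proof -
    have "v \<notin> S" using v unfolding T_def by simp
    then show ?thesis unfolding B_def g1_def g2_def using tangent_bound[OF k1 a0 a1 d1[OF v]] by simp
  qed
  have AB: "A v \<le> B v" if v: "v \<in> V" for v
  proof (cases "v \<in> S")
    case True
    then show ?thesis unfolding A_def B_def using degS[OF v] a0 by (auto intro: powr_mono2)
  next
    case False
    then have "v \<in> T" unfolding T_def using v by simp
    then show ?thesis using AgT gB by force
  qed
  have VST: "V = S \<union> T" "S \<inter> T = {}" unfolding T_def using TV by auto
  have sumA: "randic0 \<alpha> V E = sum A V" unfolding randic0_def A_def by simp
  have sumB: "sum B V = real k * real (n - 1) powr \<alpha> + (real (card T) * g2 + (real (\<Sum>v\<in>T. d v) - 2 * real (card T)) * (g2 - g1))"
  proof -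
    have "sum B V = sum B S + sum B T" unfolding VST(1) by (rule sum.union_disjoint[OF finS finT VST(2)])
    also have "sum B S = real k * real (n - 1) powr \<alpha>" unfolding B_def using S(2) by simp
    also have "sum B T = (\<Sum>v\<in>T. g2 + (real (d v) - 2) * (g2 - g1))"
      by (rule sum.cong) (auto simp: B_def T_def)
    also have "\<dots> = real (card T) * g2 + (real (\<Sum>v\<in>T. d v) - 2 * real (card T)) * (g2 - g1)"
    proof -
      have e1: "(\<Sum>v\<in>T. g2 + (real (d v) - 2) * (g2 - g1)) = (\<Sum>v\<in>T. g2) + (\<Sum>v\<in>T. (real (d v) - 2)) * (g2 - g1)"
        by (simp add: sum.distrib sum_distrib_right)
      have e2: "(\<Sum>v\<in>T. (real (d v) - 2)) = real (\<Sum>v\<in>T. d v) - 2 * real (card T)"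
        by (simp add: sum_subtractf of_nat_sum)
      show ?thesis unfolding e1 e2 by simp
    qed
    finally show ?thesis .
  qed
  have BR: "sum B V \<le> R"
  proof -
    have "real (\<Sum>v\<in>T. d v) \<le> real (2 * (card T - 1))" using sumd by (simp only: of_nat_le_iff)
    also have "\<dots> = 2 * (real (card T) - 1)" using m2 by (simp add: of_nat_diff)
    finally have "real (\<Sum>v\<in>T. d v) \<le> 2 * (real (card T) - 1)" .
    then have "(real (\<Sum>v\<in>T. d v) - 2 * real (card T)) * (g2 - g1) \<le> (-2) * (g2 - g1)"
      using g12 by (intro mult_right_mono) auto
    moreover have c: "real (card T) = real n - real k" using cT kn by simp
    moreover have e1: "g1 = real (k + 1) powr \<alpha>" unfolding g1_def gg_def
      by (rule arg_cong[where f="\<lambda>x. real x powr \<alpha>"]) simp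
    moreover have e2: "g2 = real (k + 2) powr \<alpha>" unfolding g2_def gg_def
      by (rule arg_cong[where f="\<lambda>x. real x powr \<alpha>"]) simp
    ultimately have R': "R = real k * real (n - 1) powr \<alpha> + 2 * g1 + (real (card T) * g2 - 2 * g2)"
      unfolding R_def by (simp add: left_diff_distrib)
    have "(-2) * (g2 - g1) = 2 * g1 - 2 * g2" by simp
    then show ?thesis unfolding sumB R' using \<open>(real (\<Sum>v\<in>T. d v) - 2 * real (card T)) * (g2 - g1) \<le> (-2) * (g2 - g1)\<close>
      by linarith
  qed
  have sAB: "sum A V \<le> sum B V" by (rule sum_mono) (rule AB)
  have bound: "randic0 \<alpha> V E \<le> R" using sumA BR sAB by linarith
  have iff: "randic0 \<alpha> V E = R \<longleftrightarrow> graph_iso V E (graph_join (complete_graph k) (path_graph (n - k)))"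
  proof
    assume iso: "graph_iso V E (graph_join (complete_graph k) (path_graph (n - k)))"
    have m2': "2 \<le> n - k" using m2 cT by simp
    have "randic0 \<alpha> V E = randic0 \<alpha> (VH k (n - k)) (EH k (n - k))" by (rule iso_randic[OF finV iso])
    also have "\<dots> = real k * real (k - 1 + (n - k)) powr \<alpha> + 2 * real (k+1) powr \<alpha>
     + (real (n - k) - 2) * real (k+2) powr \<alpha>" by (rule randic_H[OF m2' k1])
    also have "k - 1 + (n - k) = n - 1" using k1 kn by simp
    also have "real (n - k) = real n - real k" using kn by simp
    finally show "randic0 \<alpha> V E = R" unfolding R_def by simp
  next
    assume eq: "randic0 \<alpha> V E = R"
    have sAB': "sum A V = sum B V" using eq sumA sAB BR by linarith
    have AeqB: "A v = B v" if "v \<in> V" for v by (rule sum_eq_le_imp[OF finV AB sAB' that])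
    have adjS: "\<forall>s\<in>S. \<forall>u\<in>V. u \<noteq> s \<longrightarrow> {u,s} \<in> E"
    proof (intro ballI impI)
      fix s u assume s: "s \<in> S" and u: "u \<in> V" "u \<noteq> s"
      have sV: "s \<in> V" using s TV by blast
      have As: "A s = real (n - 1) powr \<alpha>" using AeqB[OF sV] s unfolding B_def by simp
      have dn: "degree V E s = n - 1"
      proof (rule ccontr)
        assume "degree V E s \<noteq> n - 1"
        then have "degree V E s < n - 1" using degS[OF sV] by simp
        then have "A s < real (n - 1) powr \<alpha>" unfolding A_def using a0 by (intro powr_less_mono2) auto
        then show False using As by simp
      qed
      have sub: "{w\<in>V. {w,s} \<in> E} \<subseteq> V - {s}" using nl by auto
      have "card {w\<in>V. {w,s} \<in> E} = card (V - {s})" using dn sV cV finV unfolding degree_def by simp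
      then have "{w\<in>V. {w,s} \<in> E} = V - {s}" using card_subset_eq[OF _ sub] finV by simp
      then show "{u,s} \<in> E" using u by blast
    qed
    have dle2: "d v \<le> 2" if v: "v \<in> T" for v
    proof (rule ccontr)
      assume "\<not> d v \<le> 2"
      then have "gg k \<alpha> (d v) < B v" using gB[OF v] by simp
      moreover have "v \<in> V" using v TV by blast
      ultimately show False using AgT[OF v] AeqB by fastforce
    qed
    have connT': "\<forall>u\<in>T. \<forall>v\<in>T. (\<lambda>x y. {x,y} \<in> ET)\<^sup>*\<^sup>* u v"
      using connT unfolding connected_graph_def by blast
    have degET: "card {u\<in>T. {u,v} \<in> ET} \<le> 2" if v: "v \<in> T" for v
      using dET[OF v] dle2[OF v] by simp
    obtain xs where xs: "distinct xs" "set xs = T"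
      "\<forall>i<length xs. \<forall>j<length xs. {xs!i, xs!j} \<in> ET \<longleftrightarrow> (i = Suc j \<or> j = Suc i)"
      using path_structure[OF finT Tne ncT ETnl ETsub connT' degET] by blast
    have adjT: "\<forall>i<length xs. \<forall>j<length xs. {xs!i, xs!j} \<in> E \<longleftrightarrow> (i = Suc j \<or> j = Suc i)"
    proof (intro allI impI)
      fix i j assume ij: "i < length xs" "j < length xs"
      have "xs!i \<in> T" "xs!j \<in> T" using ij xs(2) nth_mem by blast+
      then have "{xs!i, xs!j} \<in> E \<longleftrightarrow> {xs!i, xs!j} \<in> ET" using ETiff by blast
      then show "{xs!i, xs!j} \<in> E \<longleftrightarrow> (i = Suc j \<or> j = Suc i)" using xs(3) ij by blast
    qed
    have setx: "set xs = V - S" using xs(2) unfolding T_def .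
    have lx: "length xs = n - k" using xs(1,2) cT by (simp add: distinct_card[symmetric])
    have nl': "\<forall>v. {v} \<notin> E" using nl by blast
    show "graph_iso V E (graph_join (complete_graph k) (path_graph (n - k)))"
      using build_iso[OF finV TV(2) S(2) xs(1) setx adjT adjS nl'] lx by simp
  qed
  show ?thesis using bound iff unfolding R_def by blast
qed


end
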